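(* Let $X$ be a uniformly convex, uniformly smooth real Banach space with normalized duality map $J$ and inverse $J^{-1}:X^*\to X$. Let $a,b\in S^*$ with $b\notin\{a,-a\}$, let $\delta(a,b)$ be the meridian arc between $a$ and $b$, and let $W(a,b)$ be the wedge engendered by it. Then $$W(a,b)^\circ=\bigcup_{c\in\delta(a,b)}\{tJ^{-1}c:t\ge 0\}=\operatorname{cone}\big(J^{-1}(\delta(a,b))\big).$$
   Context: $X^*$ is the norm dual of $X$ with pairing $\langle\cdot,\cdot\rangle$, and $S^*=\{c\in X^*:\|c\|_{X^*}=1\}$. The normalized duality map $J:X\to X^*$ is defined by $\langle Jx,x\rangle=\|Jx\|_{X^*}\|x\|=\|x\|^2=\|Jx\|_{X^*}^2$; it is a homogeneous homeomorphism. For $a,b\in S^*$ with $b\notin\{a,-a\}$, the meridian arc is $\delta(a,b)=\{(\lambda a+\mu b)/\|\lambda a+\mu b\|_{X^*}:\lambda,\mu\ge 0,\ (\lambda,\mu)\neq(0,0)\}$, i.e. the arc of $\operatorname{span}\{a,b\}\cap S^*$ joining $a$ and $b$ containing no pair of diametrically opposite points. The wedge engendered by $\delta(a,b)$ is the closed convex cone $W(a,b)=\{x\in X:\langle c,x\rangle\le 0 \text{ for all } c\in\delta(a,b)\}$. For a set $A$, $\operatorname{cone}A=\{ta:t\ge 0,a\in A\}$. The polar of a closed convex cone $K$ is $K^\circ=\{x\in X:P_Kx=0\}$, where $P_K x=\operatorname{argmin}\{\|x-k\|:k\in K\}$ is the metric projection. *)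

theory Defs
  imports "HOL-Analysis.Analysis"
begin

(*The norm dual X* of a real Banach space X is rendered as the Banach space
  of bounded linear functionals 'a =>L real; the pairing is blinfun_apply.*)

definition uniformly_convex :: "'a::real_normed_vector itself \<Rightarrow> bool" where
  "uniformly_convex _ \<longleftrightarrow>
     (\<forall>\<epsilon>>0. \<exists>\<delta>>0. \<forall>x y::'a. norm x \<le> 1 \<and> norm y \<le> 1 \<and> norm (x - y) \<ge> \<epsilon>
        \<longrightarrow> norm ((1/2) *\<^sub>R (x + y)) \<le> 1 - \<delta>)"

definition modulus_smoothness :: "'a::real_normed_vector itself \<Rightarrow> real \<Rightarrow> real" where
  "modulus_smoothness _ \<tau> =
     (SUP p \<in> {(x, y::'a). norm x = 1 \<and> norm y = 1}.
        (norm (fst p + \<tau> *\<^sub>R snd p) + norm (fst p - \<tau> *\<^sub>R snd p)) / 2 - 1)"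

definition uniformly_smooth :: "'a::real_normed_vector itself \<Rightarrow> bool" where
  "uniformly_smooth T \<longleftrightarrow>
     ((\<lambda>\<tau>. modulus_smoothness T \<tau> / \<tau>) \<longlongrightarrow> 0) (at_right 0)"

(*Normalized duality map: J x is the functional with
  <Jx,x> = norm(Jx) * norm x = norm x^2 = norm(Jx)^2 (single-valued in smooth spaces).*)
definition dualJ :: "'a::real_normed_vector \<Rightarrow> ('a \<Rightarrow>\<^sub>L real)" where
  "dualJ x = (THE c. blinfun_apply c x = norm c * norm x \<and> norm c * norm x = (norm x)^2
                    \<and> (norm x)^2 = (norm c)^2)"

definition dualJinv :: "('a::real_normed_vector \<Rightarrow>\<^sub>L real) \<Rightarrow> 'a" where
  "dualJinv c = (THE x. dualJ x = c)"

definition meridian_arc :: "('a::real_normed_vector \<Rightarrow>\<^sub>L real) \<Rightarrow> ('a \<Rightarrow>\<^sub>L real) \<Rightarrow> ('a \<Rightarrow>\<^sub>L real) set" where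
  "meridian_arc a b = {(1 / norm (l *\<^sub>R a + m *\<^sub>R b)) *\<^sub>R (l *\<^sub>R a + m *\<^sub>R b) | l m.
       l \<ge> 0 \<and> m \<ge> 0 \<and> (l, m) \<noteq> (0, 0)}"

definition wedge :: "('a::real_normed_vector \<Rightarrow>\<^sub>L real) \<Rightarrow> ('a \<Rightarrow>\<^sub>L real) \<Rightarrow> 'a set" where
  "wedge a b = {x. \<forall>c \<in> meridian_arc a b. blinfun_apply c x \<le> 0}"

definition cone_hull_of :: "'a::real_vector set \<Rightarrow> 'a set" where
  "cone_hull_of A = {t *\<^sub>R x | t x. t \<ge> 0 \<and> x \<in> A}"

definition metric_proj :: "'a::real_normed_vector set \<Rightarrow> 'a \<Rightarrow> 'a" where
  "metric_proj K x = (THE k. k \<in> K \<and> (\<forall>k'\<in>K. norm (x - k) \<le> norm (x - k')))"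

definition polar_cone :: "'a::real_normed_vector set \<Rightarrow> 'a set" where
  "polar_cone K = {x. metric_proj K x = 0}"

end

theory Submission
  imports Defs
begin

lemma uc_strict:
  fixes u v :: "'a::real_normed_vector"
  assumes uc: "uniformly_convex TYPE('a)" and "norm u \<le> r" "norm v \<le> r" "u \<noteq> v"
  shows "norm ((1/2) *\<^sub>R (u + v)) < r"
proof -
  have "u \<noteq> 0 \<or> v \<noteq> 0" using assms(4) by auto
  then have "norm u > 0 \<or> norm v > 0" by auto
  then have r: "r > 0" using assms(2,3) by linarith
  define e where "e = norm (u - v) / r"
  have e: "e > 0" using assms r by (simp add: e_def)
  obtain d where d: "d > 0" and H0: "\<forall>x y::'a. norm x \<le> 1 \<and> norm y \<le> 1 \<and> norm (x - y) \<ge> e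
        \<longrightarrow> norm ((1/2) *\<^sub>R (x + y)) \<le> 1 - d"
    using uc[unfolded uniformly_convex_def, rule_format, OF e] by auto
  have H: "norm ((1/2) *\<^sub>R (x + y)) \<le> 1 - d" if "norm x \<le> 1" "norm y \<le> 1" "norm (x - y) \<ge> e" for x y :: 'a
    using H0 that by blast
  have "norm ((1/2) *\<^sub>R ((1/r) *\<^sub>R u + (1/r) *\<^sub>R v)) \<le> 1 - d"
  proof (rule H)
    show "norm ((1/r) *\<^sub>R u) \<le> 1" using assms r by (simp add: field_simps)
    show "norm ((1/r) *\<^sub>R v) \<le> 1" using assms r by (simp add: field_simps)
    have "(1/r) *\<^sub>R u - (1/r) *\<^sub>R v = (1/r) *\<^sub>R (u - v)" by (simp add: algebra_simps)
    then show "e \<le> norm ((1/r) *\<^sub>R u - (1/r) *\<^sub>R v)" using r by (simp add: e_def divide_inverse mult.commute)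
  qed
  moreover have "(1/2) *\<^sub>R ((1/r) *\<^sub>R u + (1/r) *\<^sub>R v) = (1/r) *\<^sub>R ((1/2) *\<^sub>R (u + v))"
    by (simp add: algebra_simps)
  ultimately have "norm ((1/2) *\<^sub>R (u + v)) / r \<le> 1 - d" using r by simp
  then have "norm ((1/2) *\<^sub>R (u + v)) \<le> r * (1 - d)" using r by (simp add: field_simps)
  moreover have "d * r > 0" using d r by simp
  ultimately show ?thesis by (simp add: algebra_simps)
qed

lemma rho_bound:
  fixes u v :: "'a::real_normed_vector"
  assumes "norm u = 1" "norm v = 1"
  shows "(norm (u + \<tau> *\<^sub>R v) + norm (u - \<tau> *\<^sub>R v)) / 2 - 1 \<le> modulus_smoothness TYPE('a) \<tau>"
  unfolding modulus_smoothness_def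
proof (rule cSUP_upper2[where x="(u,v)"])
  show "(u, v) \<in> {(x, y). norm x = 1 \<and> norm y = 1}" using assms by simp
  show "bdd_above ((\<lambda>p. (norm (fst p + \<tau> *\<^sub>R snd p) + norm (fst p - \<tau> *\<^sub>R snd p)) / 2 - 1) `
       {(x, y::'a). norm x = 1 \<and> norm y = 1})"
  proof (rule bdd_aboveI2[where M="\<bar>\<tau>\<bar>"], clarify)
    fix x y :: 'a assume "norm x = 1" "norm y = 1"
    have "norm (x + \<tau> *\<^sub>R y) \<le> 1 + \<bar>\<tau>\<bar>" using norm_triangle_ineq[of x "\<tau> *\<^sub>R y"] \<open>norm x = 1\<close> \<open>norm y = 1\<close> by simp
    moreover have "norm (x - \<tau> *\<^sub>R y) \<le> 1 + \<bar>\<tau>\<bar>" using norm_triangle_ineq4[of x "\<tau> *\<^sub>R y"] \<open>norm x = 1\<close> \<open>norm y = 1\<close> by simp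
    ultimately show "(norm (fst (x, y) + \<tau> *\<^sub>R snd (x, y)) + norm (fst (x, y) - \<tau> *\<^sub>R snd (x, y))) / 2 - 1 \<le> \<bar>\<tau>\<bar>"
      by (simp add: field_simps)
  qed
qed simp

lemma us_small:
  assumes "uniformly_smooth TYPE('a::real_normed_vector)" "e > 0"
  shows "\<exists>\<tau>>0. modulus_smoothness TYPE('a) \<tau> / \<tau> < e"
proof -
  have "\<forall>\<^sub>F \<tau> in at_right 0. dist (modulus_smoothness TYPE('a) \<tau> / \<tau>) 0 < e"
    using assms unfolding uniformly_smooth_def tendsto_iff by blast
  moreover have "\<forall>\<^sub>F \<tau> in at_right (0::real). \<tau> > 0" by (simp add: eventually_at_right_less)
  ultimately have "\<forall>\<^sub>F \<tau> in at_right (0::real). \<tau> > 0 \<and> modulus_smoothness TYPE('a) \<tau> / \<tau> < e"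
  proof eventually_elim
    case (elim \<tau>)
    have "modulus_smoothness TYPE('a) \<tau> / \<tau> \<le> \<bar>modulus_smoothness TYPE('a) \<tau>\<bar> / \<tau>"
      using elim by (simp add: divide_right_mono)
    then show ?case using elim by simp
  qed
  then show ?thesis
    by (metis (mono_tags, lifting) eventually_happens' trivial_limit_at_right_real)
qed

definition dq :: "'a::real_normed_vector \<Rightarrow> 'a \<Rightarrow> real \<Rightarrow> real" where
  "dq y z t = (norm (y + t *\<^sub>R z) - norm y) / t"

definition Dd :: "'a::real_normed_vector \<Rightarrow> 'a \<Rightarrow> real" where
  "Dd y z = (INF t\<in>{0<..}. dq y z t)"

lemma dq_lower: "t > 0 \<Longrightarrow> - norm z \<le> dq y z t"
proof -
  assume t: "t > 0"
  have "norm y \<le> norm (y + t *\<^sub>R z) + norm (t *\<^sub>R z)"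
    by (metis add_diff_cancel norm_triangle_ineq4)
  then have "- t * norm z \<le> norm (y + t *\<^sub>R z) - norm y" using t by simp
  then show ?thesis using t unfolding dq_def by (simp add: field_simps)
qed

lemma dq_upper: "t > 0 \<Longrightarrow> dq y z t \<le> norm z"
proof -
  assume t: "t > 0"
  have "norm (y + t *\<^sub>R z) \<le> norm y + norm (t *\<^sub>R z)" by (rule norm_triangle_ineq)
  then have "norm (y + t *\<^sub>R z) - norm y \<le> t * norm z" using t by simp
  then show ?thesis using t unfolding dq_def by (simp add: field_simps)
qed

lemma dq_bdd: "bdd_below (dq y z ` {0<..})"
  by (rule bdd_belowI2[where m="- norm z"]) (simp add: dq_lower)

lemma Dd_le: "t > 0 \<Longrightarrow> Dd y z \<le> dq y z t"
  unfolding Dd_def by (rule cINF_lower[OF dq_bdd]) simp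

lemma Dd_ge: "(\<And>t. t > 0 \<Longrightarrow> L \<le> dq y z t) \<Longrightarrow> L \<le> Dd y z"
  unfolding Dd_def by (rule cINF_greatest) auto

lemma dq_mono:
  assumes "0 < s" "s \<le> t"
  shows "dq y z s \<le> dq y z t"
proof -
  have t: "t > 0" using assms by simp
  have eq: "y + s *\<^sub>R z = (1 - s/t) *\<^sub>R y + (s/t) *\<^sub>R (y + t *\<^sub>R z)"
    using t by (simp add: algebra_simps)
  have "norm (y + s *\<^sub>R z) \<le> norm ((1 - s/t) *\<^sub>R y) + norm ((s/t) *\<^sub>R (y + t *\<^sub>R z))"
    unfolding eq by (rule norm_triangle_ineq)
  also have "\<dots> = (1 - s/t) * norm y + (s/t) * norm (y + t *\<^sub>R z)"
    using assms t by simp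
  finally have "norm (y + s *\<^sub>R z) - norm y \<le> (s/t) * (norm (y + t *\<^sub>R z) - norm y)"
    by (simp add: algebra_simps)
  then have "(norm (y + s *\<^sub>R z) - norm y) / s \<le> (norm (y + t *\<^sub>R z) - norm y) / t"
    using assms t by (simp add: field_simps)
  then show ?thesis unfolding dq_def .
qed

lemma Dd_approx:
  assumes "e > 0" "t0 > 0"
  shows "\<exists>t. 0 < t \<and> t \<le> t0 \<and> dq y z t < Dd y z + e"
proof -
  have "Dd y z < Dd y z + e" using assms by simp
  then have "\<exists>t\<in>{0<..}. dq y z t < Dd y z + e"
    using cINF_less_iff[of "{0<..}" "dq y z" "Dd y z + e"] dq_bdd[of y z] unfolding Dd_def by auto
  then obtain t where t: "t > 0" "dq y z t < Dd y z + e" by auto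
  have "dq y z (min t t0) \<le> dq y z t" using t assms by (intro dq_mono) auto
  then show ?thesis using t assms by (intro exI[of _ "min t t0"]) auto
qed

lemma Dd_bound: "\<bar>Dd y z\<bar> \<le> norm z"
proof -
  have "Dd y z \<le> norm z" using Dd_le[of 1 y z] dq_upper[of 1 y z] by simp
  moreover have "- norm z \<le> Dd y z" by (rule Dd_ge) (rule dq_lower)
  ultimately show ?thesis by simp
qed

lemma Dd_self: "Dd y y = norm y"
proof -
  have "dq y y t = norm y" if "t > 0" for t
  proof -
    have "y + t *\<^sub>R y = (1 + t) *\<^sub>R y" by (simp add: algebra_simps)
    then have "norm (y + t *\<^sub>R y) = (1 + t) * norm y" using that by simp
    then show ?thesis using that unfolding dq_def by (simp add: field_simps)
  qed
  then have "norm y \<le> Dd y y" by (intro Dd_ge) simp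
  moreover have "Dd y y \<le> norm y" using Dd_le[of 1 y y] \<open>\<And>t. t > 0 \<Longrightarrow> dq y y t = norm y\<close>[of 1] by simp
  ultimately show ?thesis by simp
qed

lemma Dd_zero: "Dd y 0 = 0"
  using Dd_bound[of y 0] by simp

lemma Dd_add: "Dd y (z1 + z2) \<le> Dd y z1 + Dd y z2"
proof (rule field_le_epsilon)
  fix e :: real assume e: "e > 0"
  obtain t1 where t1: "t1 > 0" "dq y z1 t1 < Dd y z1 + e/2" using Dd_approx[of "e/2" 1] e by auto
  obtain t2 where t2: "t2 > 0" "t2 \<le> t1" "dq y z2 t2 < Dd y z2 + e/2" using Dd_approx[of "e/2" t1] e t1 by auto
  define t where "t = t2 / 2"
  have t: "t > 0" using t2 by (simp add: t_def)
  have "dq y z1 (2*t) \<le> dq y z1 t1" using t2 t by (intro dq_mono) (auto simp: t_def)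
  have eq: "y + t *\<^sub>R (z1 + z2) = (1/2) *\<^sub>R (y + (2*t) *\<^sub>R z1) + (1/2) *\<^sub>R (y + (2*t) *\<^sub>R z2)"
  proof -
    have "(1/2) *\<^sub>R (y + (2*t) *\<^sub>R z1) + (1/2) *\<^sub>R (y + (2*t) *\<^sub>R z2) = ((1/2) *\<^sub>R y + (1/2) *\<^sub>R y) + t *\<^sub>R z1 + t *\<^sub>R z2"
      by (simp add: algebra_simps)
    also have "(1/2) *\<^sub>R y + (1/2) *\<^sub>R y = y" by (simp flip: scaleR_add_left)
    finally show ?thesis by (simp add: scaleR_add_right)
  qed
  have "norm (y + t *\<^sub>R (z1 + z2)) \<le> norm ((1/2) *\<^sub>R (y + (2*t) *\<^sub>R z1)) + norm ((1/2) *\<^sub>R (y + (2*t) *\<^sub>R z2))"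
    unfolding eq by (rule norm_triangle_ineq)
  also have "\<dots> = (1/2) * norm (y + (2*t) *\<^sub>R z1) + (1/2) * norm (y + (2*t) *\<^sub>R z2)"
    by simp
  finally have ineq: "norm (y + t *\<^sub>R (z1 + z2)) \<le> (1/2) * norm (y + (2*t) *\<^sub>R z1) + (1/2) * norm (y + (2*t) *\<^sub>R z2)" .
  define N where "N = norm (y + t *\<^sub>R (z1 + z2))"
  define U where "U = norm (y + (2*t) *\<^sub>R z1)"
  define V where "V = norm (y + (2*t) *\<^sub>R z2)"
  define n where "n = norm y"
  have "N \<le> (1/2) * U + (1/2) * V" using ineq unfolding N_def U_def V_def .
  then have "N - n \<le> (1/2) * (U - n) + (1/2) * (V - n)" by argo
  then have "(N - n) / t \<le> ((1/2) * (U - n) + (1/2) * (V - n)) / t" using t by (simp add: divide_right_mono)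
  also have "\<dots> = (U - n) / (2*t) + (V - n) / (2*t)" using t by (simp add: field_simps)
  finally have F: "(N - n) / t \<le> (U - n) / (2*t) + (V - n) / (2*t)" .
  have A: "(N - n) / t = dq y (z1 + z2) t" unfolding dq_def N_def n_def ..
  have B: "(U - n) / (2*t) = dq y z1 (2*t)" unfolding dq_def U_def n_def ..
  have C: "(V - n) / (2*t) = dq y z2 (2*t)" unfolding dq_def V_def n_def ..
  have tt: "2*t = t2" by (simp add: t_def)
  have D: "dq y z2 (2*t) \<le> dq y z2 t2" unfolding tt by simp
  have E: "Dd y (z1 + z2) \<le> dq y (z1 + z2) t" using Dd_le[OF t] .
  show "Dd y (z1 + z2) \<le> Dd y z1 + Dd y z2 + e"
    using F A B C D E t1(2) t2(3) \<open>dq y z1 (2*t) \<le> dq y z1 t1\<close> by linarith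
qed

lemma Dd_neg_ge: "0 \<le> Dd y z + Dd y (- z)"
proof -
  have "- dq y (-z) t2 \<le> Dd y z" if t2: "t2 > 0" for t2
  proof (rule Dd_ge)
    fix t1 :: real assume t1: "t1 > 0"
    define m where "m = min t1 t2"
    have m: "m > 0" using t1 t2 by (simp add: m_def)
    have "2 *\<^sub>R y = (y + m *\<^sub>R z) + (y + m *\<^sub>R (-z))" by (simp add: algebra_simps scaleR_2)
    then have "2 * norm y \<le> norm (y + m *\<^sub>R z) + norm (y + m *\<^sub>R (-z))"
      by (metis norm_scaleR norm_triangle_ineq abs_numeral)
    then have h: "0 \<le> (norm (y + m *\<^sub>R z) - norm y) + (norm (y + m *\<^sub>R (-z)) - norm y)" by linarith
    have "0 \<le> ((norm (y + m *\<^sub>R z) - norm y) + (norm (y + m *\<^sub>R (-z)) - norm y)) / m"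
      using m h by simp
    moreover have "dq y z m + dq y (-z) m = ((norm (y + m *\<^sub>R z) - norm y) + (norm (y + m *\<^sub>R (-z)) - norm y)) / m"
      unfolding dq_def by (simp only: add_divide_distrib)
    ultimately have "0 \<le> dq y z m + dq y (-z) m" by simp
    moreover have "dq y z m \<le> dq y z t1" using m by (intro dq_mono) (auto simp: m_def)
    moreover have "dq y (-z) m \<le> dq y (-z) t2" using m by (intro dq_mono) (auto simp: m_def)
    ultimately show "- dq y (-z) t2 \<le> dq y z t1" by linarith
  qed
  then have "- Dd y z \<le> Dd y (-z)" by (intro Dd_ge) (metis minus_le_iff)
  then show ?thesis by simp
qed

lemma Dd_neg_le:
  fixes y :: "'a::real_normed_vector"
  assumes us: "uniformly_smooth TYPE('a)" and y: "y \<noteq> 0"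
  shows "Dd y z + Dd y (- z) \<le> 0"
proof (cases "z = 0")
  case True then show ?thesis by (simp add: Dd_zero)
next
  case False
  define ny where "ny = norm y"
  define nz where "nz = norm z"
  have ny: "ny > 0" using y by (simp add: ny_def)
  have nz: "nz > 0" using False by (simp add: nz_def)
  show ?thesis
  proof (rule field_le_epsilon)
    fix e :: real assume e: "e > 0"
    have "e / (2 * nz) > 0" using e nz by simp
    then obtain \<tau> where tau: "\<tau> > 0" and rt: "modulus_smoothness TYPE('a) \<tau> / \<tau> < e / (2 * nz)"
      using us_small[OF us] by blast
    define t where "t = \<tau> * ny / nz"
    have t: "t > 0" using tau ny nz by (simp add: t_def)
    define u where "u = (1 / ny) *\<^sub>R y"
    define v where "v = (1 / nz) *\<^sub>R z"
    have nu: "norm u = 1" using ny by (simp add: u_def ny_def)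
    have nv: "norm v = 1" using nz by (simp add: v_def nz_def)
    have e1: "y + t *\<^sub>R z = ny *\<^sub>R (u + \<tau> *\<^sub>R v)"
      using ny nz by (simp add: u_def v_def t_def scaleR_add_right)
    have e2: "y + t *\<^sub>R (- z) = ny *\<^sub>R (u - \<tau> *\<^sub>R v)"
      using ny nz by (simp add: u_def v_def t_def scaleR_diff_right)
    define N1 where "N1 = norm (u + \<tau> *\<^sub>R v)"
    define N2 where "N2 = norm (u - \<tau> *\<^sub>R v)"
    define R where "R = modulus_smoothness TYPE('a) \<tau>"
    have rb: "(N1 + N2) / 2 - 1 \<le> R" unfolding N1_def N2_def R_def by (rule rho_bound[OF nu nv])
    have "dq y z t + dq y (-z) t = (ny * N1 - ny) / t + (ny * N2 - ny) / t"
      unfolding dq_def e1 e2 N1_def N2_def using ny by (simp add: ny_def)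
    also have "\<dots> = nz * (N1 + N2 - 2) / \<tau>"
      using ny nz tau by (simp add: t_def field_simps)
    also have "\<dots> \<le> nz * (2 * R) / \<tau>"
      using rb nz tau by (intro divide_right_mono mult_left_mono) (auto simp: field_simps)
    also have "\<dots> = 2 * nz * (R / \<tau>)" by simp
    also have "\<dots> < 2 * nz * (e / (2 * nz))"
      using rt nz by (intro mult_strict_left_mono) (auto simp: R_def)
    also have "\<dots> = e" using nz by simp
    finally have "dq y z t + dq y (-z) t < e" .
    moreover have "Dd y z \<le> dq y z t" "Dd y (-z) \<le> dq y (-z) t" using Dd_le[OF t] by auto
    ultimately show "Dd y z + Dd y (- z) \<le> 0 + e" by linarith
  qed
qed

lemma Dd_neg:
  assumes "uniformly_smooth TYPE('a::real_normed_vector)" "(y::'a) \<noteq> 0"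
  shows "Dd y (- z) = - Dd y z"
  using Dd_neg_le[OF assms, of z] Dd_neg_ge[of y z] by linarith

lemma Dd_add_eq:
  assumes "uniformly_smooth TYPE('a::real_normed_vector)" "(y::'a) \<noteq> 0"
  shows "Dd y (z1 + z2) = Dd y z1 + Dd y z2"
proof -
  have "Dd y (- z1 + - z2) \<le> Dd y (- z1) + Dd y (- z2)" by (rule Dd_add)
  then have "- Dd y (z1 + z2) \<le> - Dd y z1 + - Dd y z2"
    unfolding minus_add_distrib[symmetric] Dd_neg[OF assms] .
  then show ?thesis using Dd_add[of y z1 z2] by linarith
qed

lemma dq_scale: "s > 0 \<Longrightarrow> t > 0 \<Longrightarrow> dq y (s *\<^sub>R z) t = s * dq y z (s * t)"
  unfolding dq_def by (simp add: field_simps)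

lemma Dd_scale_pos:
  assumes s: "s > 0"
  shows "Dd y (s *\<^sub>R z) = s * Dd y z"
proof (rule antisym)
  have "Dd y (s *\<^sub>R z) / s \<le> Dd y z"
  proof (rule Dd_ge)
    fix t :: real assume t: "t > 0"
    have "Dd y (s *\<^sub>R z) \<le> dq y (s *\<^sub>R z) (t / s)" using t s by (intro Dd_le) simp
    also have "\<dots> = s * dq y z t" using t s by (simp add: dq_scale)
    finally show "Dd y (s *\<^sub>R z) / s \<le> dq y z t" using s by (simp add: field_simps)
  qed
  then show "Dd y (s *\<^sub>R z) \<le> s * Dd y z" using s by (simp add: field_simps)
  show "s * Dd y z \<le> Dd y (s *\<^sub>R z)"
  proof (rule Dd_ge)
    fix t :: real assume t: "t > 0"
    have "s * Dd y z \<le> s * dq y z (s * t)" using s t by (intro mult_left_mono Dd_le) auto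
    also have "\<dots> = dq y (s *\<^sub>R z) t" using s t by (simp add: dq_scale)
    finally show "s * Dd y z \<le> dq y (s *\<^sub>R z) t" .
  qed
qed

lemma Dd_scale:
  assumes "uniformly_smooth TYPE('a::real_normed_vector)" "(y::'a) \<noteq> 0"
  shows "Dd y (s *\<^sub>R z) = s * Dd y z"
proof -
  consider "s > 0" | "s = 0" | "s < 0" by linarith
  then show ?thesis
  proof cases
    case 1 then show ?thesis by (rule Dd_scale_pos)
  next
    case 2 then show ?thesis by (simp add: Dd_zero)
  next
    case 3
    have "s *\<^sub>R z = - ((- s) *\<^sub>R z)" by simp
    then have "Dd y (s *\<^sub>R z) = Dd y (- ((- s) *\<^sub>R z))" by (rule arg_cong)
    also have "\<dots> = - Dd y ((- s) *\<^sub>R z)" by (rule Dd_neg[OF assms])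
    also have "\<dots> = - ((- s) * Dd y z)" using 3 by (subst Dd_scale_pos) auto
    also have "\<dots> = s * Dd y z" by simp
    finally show ?thesis .
  qed
qed

lemma Dd_bounded_linear:
  assumes "uniformly_smooth TYPE('a::real_normed_vector)" "(y::'a) \<noteq> 0"
  shows "bounded_linear (\<lambda>z. norm y * Dd y z)"
proof (rule bounded_linear_intro[where K="norm y"])
  fix z1 z2 :: 'a show "norm y * Dd y (z1 + z2) = norm y * Dd y z1 + norm y * Dd y z2"
    by (simp add: Dd_add_eq[OF assms] algebra_simps)
next
  fix r :: real and z :: 'a show "norm y * Dd y (r *\<^sub>R z) = r *\<^sub>R (norm y * Dd y z)"
    by (simp add: Dd_scale[OF assms])
next
  fix z :: 'a show "norm (norm y * Dd y z) \<le> norm z * norm y"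
    using Dd_bound[of y z] by (simp add: abs_mult mult_left_mono mult.commute)
qed

definition Jc :: "'a::real_normed_vector \<Rightarrow> ('a \<Rightarrow>\<^sub>L real)" where
  "Jc y = Blinfun (\<lambda>z. norm y * Dd y z)"

lemma Jc_apply:
  assumes "uniformly_smooth TYPE('a::real_normed_vector)" "(y::'a) \<noteq> 0"
  shows "blinfun_apply (Jc y) z = norm y * Dd y z"
  unfolding Jc_def using bounded_linear_Blinfun_apply[OF Dd_bounded_linear[OF assms]] by simp

lemma Jc_self:
  assumes "uniformly_smooth TYPE('a::real_normed_vector)" "(y::'a) \<noteq> 0"
  shows "blinfun_apply (Jc y) y = (norm y)^2"
  by (simp add: Jc_apply[OF assms] Dd_self power2_eq_square)

lemma Jc_norm:
  assumes "uniformly_smooth TYPE('a::real_normed_vector)" "(y::'a) \<noteq> 0"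
  shows "norm (Jc y) = norm y"
proof (rule antisym)
  show "norm (Jc y) \<le> norm y"
  proof (rule norm_blinfun_bound)
    fix z show "norm (blinfun_apply (Jc y) z) \<le> norm y * norm z"
      using Jc_apply[OF assms] Dd_bound[of y z] by (simp add: abs_mult mult_left_mono)
  qed simp
  have "(norm y)^2 \<le> norm (Jc y) * norm y"
    using norm_blinfun[of "Jc y" y] Jc_self[OF assms] by simp
  then show "norm y \<le> norm (Jc y)" using assms(2) by (simp add: power2_eq_square)
qed

lemma Jc_unique:
  assumes us: "uniformly_smooth TYPE('a::real_normed_vector)" and y: "(y::'a) \<noteq> 0"
    and c1: "blinfun_apply c y = (norm y)^2" and c2: "norm c = norm y"
  shows "c = Jc y"
proof -
  have ny: "norm y > 0" using y by simp
  have le: "blinfun_apply c z \<le> blinfun_apply (Jc y) z" for z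
  proof -
    have "blinfun_apply c z / norm y \<le> Dd y z"
    proof (rule Dd_ge)
      fix t :: real assume t: "t > 0"
      have "blinfun_apply c (y + t *\<^sub>R z) \<le> norm c * norm (y + t *\<^sub>R z)"
        using norm_blinfun[of c "y + t *\<^sub>R z"] by simp
      then have "(norm y)^2 + t * blinfun_apply c z \<le> norm y * norm (y + t *\<^sub>R z)"
        using c1 c2 by (simp add: blinfun.add_right blinfun.scaleR_right)
      then have "t * blinfun_apply c z \<le> norm y * (norm (y + t *\<^sub>R z) - norm y)"
        by (simp add: power2_eq_square algebra_simps)
      then have "blinfun_apply c z \<le> norm y * dq y z t"
        using t unfolding dq_def by (simp add: field_simps)
      then show "blinfun_apply c z / norm y \<le> dq y z t" using ny by (simp add: field_simps)
    qed
    then show ?thesis using ny Jc_apply[OF us y] by (simp add: field_simps)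
  qed
  show ?thesis
  proof (rule blinfun_eqI, rule antisym)
    fix z show "blinfun_apply c z \<le> blinfun_apply (Jc y) z" by (rule le)
    have "blinfun_apply c (-z) \<le> blinfun_apply (Jc y) (-z)" by (rule le)
    then show "blinfun_apply (Jc y) z \<le> blinfun_apply c z" by (simp add: blinfun.minus_right)
  qed
qed

lemma dualJ_iff:
  fixes y :: "'a::real_normed_vector"
  assumes us: "uniformly_smooth TYPE('a)"
  shows "dualJ y = c \<longleftrightarrow> (blinfun_apply c y = (norm y)^2 \<and> norm c = norm y)"
proof -
  define P where "P = (\<lambda>c::'a \<Rightarrow>\<^sub>L real. blinfun_apply c y = norm c * norm y \<and> norm c * norm y = (norm y)^2
                    \<and> (norm y)^2 = (norm c)^2)"
  have Pi: "P c' \<longleftrightarrow> (blinfun_apply c' y = (norm y)^2 \<and> norm c' = norm y)" for c'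
  proof
    assume "P c'"
    then have "norm c' = norm y" unfolding P_def using power2_eq_iff_nonneg[of "norm y" "norm c'"] by auto
    then show "blinfun_apply c' y = (norm y)^2 \<and> norm c' = norm y" using \<open>P c'\<close> unfolding P_def by auto
  next
    assume "blinfun_apply c' y = (norm y)^2 \<and> norm c' = norm y"
    then show "P c'" unfolding P_def by (simp add: power2_eq_square)
  qed
  have ex1: "\<exists>!c. P c"
  proof (cases "y = 0")
    case True
    show ?thesis
    proof (rule ex1I[of _ 0])
      show "P 0" using True unfolding P_def by simp
      fix c' assume "P c'" then show "c' = 0" using True Pi by simp
    qed
  next
    case False
    show ?thesis
    proof (rule ex1I[of _ "Jc y"])
      show "P (Jc y)" using Pi Jc_self[OF us False] Jc_norm[OF us False] by simp
      fix c' assume "P c'" then show "c' = Jc y" using Pi Jc_unique[OF us False] by simp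
    qed
  qed
  have dj: "dualJ y = (THE c. P c)" unfolding dualJ_def P_def ..
  show ?thesis
  proof
    assume "dualJ y = c"
    then have "P c" using theI'[OF ex1] dj by simp
    then show "blinfun_apply c y = (norm y)^2 \<and> norm c = norm y" using Pi by simp
  next
    assume "blinfun_apply c y = (norm y)^2 \<and> norm c = norm y"
    then have "P c" using Pi by simp
    then show "dualJ y = c" using the1_equality[OF ex1] dj by simp
  qed
qed

lemma dualJ_props:
  fixes y :: "'a::real_normed_vector"
  assumes us: "uniformly_smooth TYPE('a)"
  shows "blinfun_apply (dualJ y) y = (norm y)^2" "norm (dualJ y) = norm y"
  using dualJ_iff[OF us, of y "dualJ y"] by auto

lemma dualJ_scale:
  fixes y :: "'a::real_normed_vector"
  assumes us: "uniformly_smooth TYPE('a)" and t: "t \<ge> 0"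
  shows "dualJ (t *\<^sub>R y) = t *\<^sub>R dualJ y"
proof -
  have "blinfun_apply (t *\<^sub>R dualJ y) (t *\<^sub>R y) = (norm (t *\<^sub>R y))^2"
    using dualJ_props[OF us, of y] t by (simp add: blinfun.scaleR_right blinfun.scaleR_left power2_eq_square)
  moreover have "norm (t *\<^sub>R dualJ y) = norm (t *\<^sub>R y)" using dualJ_props[OF us, of y] t by simp
  ultimately show ?thesis using dualJ_iff[OF us] by blast
qed

lemma dualJ_nonpos:
  fixes x k :: "'a::real_normed_vector"
  assumes us: "uniformly_smooth TYPE('a)"
    and H: "\<And>t. t > 0 \<Longrightarrow> norm x \<le> norm (x - t *\<^sub>R k)"
  shows "blinfun_apply (dualJ x) k \<le> 0"
proof (cases "x = 0")
  case True
  then have "dualJ x = 0" using dualJ_iff[OF us, of x 0] by simp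
  then show ?thesis by simp
next
  case False
  have "dualJ x = Jc x" using dualJ_iff[OF us] Jc_self[OF us False] Jc_norm[OF us False] by blast
  have "0 \<le> Dd x (- k)"
  proof (rule Dd_ge)
    fix t :: real assume t: "t > 0"
    have "x + t *\<^sub>R (- k) = x - t *\<^sub>R k" by simp
    then show "0 \<le> dq x (- k) t" using H[OF t] t unfolding dq_def by simp
  qed
  then have "Dd x k \<le> 0" using Dd_neg[OF us False] by simp
  then show ?thesis using \<open>dualJ x = Jc x\<close> Jc_apply[OF us False]
    by (simp add: mult_nonneg_nonpos)
qed

lemma infdist_approx:
  assumes "K \<noteq> {}" "e > 0"
  shows "\<exists>k\<in>K. dist x k < infdist x K + e"
proof -
  have "infdist x K < infdist x K + e" using assms by simp
  then show ?thesis unfolding infdist_notempty[OF assms(1)]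
    using cINF_less_iff[of K "dist x" "infdist x K + e"] assms(1)
    by (metis bdd_below_image_dist infdist_notempty[OF assms(1)])
qed

lemma nearest_exists:
  fixes K :: "'a::banach set"
  assumes uc: "uniformly_convex TYPE('a)" and cl: "closed K" and cv: "convex K" and ne: "K \<noteq> {}"
  shows "\<exists>k\<in>K. \<forall>k'\<in>K. norm (x - k) \<le> norm (x - k')"
proof -
  define d where "d = infdist x K"
  have d0: "d \<ge> 0" by (simp add: d_def infdist_nonneg)
  have dle: "d \<le> norm (x - k')" if "k' \<in> K" for k'
    using infdist_le[OF that, of x] by (simp add: d_def dist_norm)
  show ?thesis
  proof (cases "d = 0")
    case True
    then have "x \<in> K" using in_closure_iff_infdist_zero[OF ne] closure_closed[OF cl] by (simp add: d_def)
    then show ?thesis by (intro bexI[of _ x]) auto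
  next
    case False
    then have dpos: "d > 0" using d0 by simp
    have "\<exists>k. k \<in> K \<and> norm (x - k) < d + inverse (real (Suc n))" for n
      using infdist_approx[OF ne, of "inverse (real (Suc n))" x] by (auto simp: d_def dist_norm)
    then have "\<forall>n. \<exists>k. k \<in> K \<and> norm (x - k) < d + inverse (real (Suc n))" by blast
    then obtain f where "\<forall>n. f n \<in> K \<and> norm (x - f n) < d + inverse (real (Suc n))"
      by (rule choice[THEN exE]) 
    then have f: "\<And>n. f n \<in> K" and fd: "\<And>n. norm (x - f n) < d + inverse (real (Suc n))" by auto
    have "Cauchy f"
    proof (rule CauchyI)
      fix \<epsilon> :: real assume \<epsilon>: "\<epsilon> > 0"
      have e': "\<epsilon> / (d + 1) > 0" using \<epsilon> d0 by simp
      obtain \<delta> where \<delta>: "\<delta> > 0" and H0: "\<forall>u v::'a. norm u \<le> 1 \<and> norm v \<le> 1 \<and> norm (u - v) \<ge> \<epsilon> / (d + 1)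
          \<longrightarrow> norm ((1/2) *\<^sub>R (u + v)) \<le> 1 - \<delta>"
        using uc[unfolded uniformly_convex_def, rule_format, OF e'] by auto
      define \<delta>' where "\<delta>' = min \<delta> (1/2)"
      have \<delta>': "\<delta>' > 0" "\<delta>' \<le> \<delta>" "\<delta>' \<le> 1/2" using \<delta> by (auto simp: \<delta>'_def)
      obtain N where N: "inverse (real (Suc N)) < \<delta>' * d" using reals_Archimedean[of "\<delta>' * d"] \<delta>' dpos by auto
      define R where "R = d + inverse (real (Suc N))"
      have iN: "inverse (real (Suc N)) \<le> 1" "inverse (real (Suc N)) > 0" by (auto simp: field_simps)
      have R: "R > 0" "R \<le> d + 1" unfolding R_def using add_pos_pos[OF dpos iN(2)] iN(1) by auto
      have fR: "norm (x - f n) \<le> R" if "n \<ge> N" for n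
      proof -
        have "inverse (real (Suc n)) \<le> inverse (real (Suc N))" using that by (simp add: field_simps)
        then show ?thesis using fd[of n] unfolding R_def by linarith
      qed
      have "\<forall>m\<ge>N. \<forall>n\<ge>N. norm (f m - f n) < \<epsilon>"
      proof (intro allI impI, rule ccontr)
        fix m n assume m: "m \<ge> N" and n: "n \<ge> N" and c: "\<not> norm (f m - f n) < \<epsilon>"
        define u where "u = (1 / R) *\<^sub>R (x - f m)"
        define v where "v = (1 / R) *\<^sub>R (x - f n)"
        have "norm u = norm (x - f m) / R" unfolding u_def norm_scaleR using R by simp
        then have nu: "norm u \<le> 1" using fR[OF m] R by simp
        have "norm v = norm (x - f n) / R" unfolding v_def norm_scaleR using R by simp
        then have nv: "norm v \<le> 1" using fR[OF n] R by simp
        have "u - v = (1 / R) *\<^sub>R (f n - f m)" by (simp add: u_def v_def algebra_simps)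
        then have "norm (u - v) = norm (f m - f n) / R" using R by (simp add: norm_minus_commute)
        moreover have "\<epsilon> / (d + 1) \<le> \<epsilon> / R" using R \<epsilon> by (intro divide_left_mono) auto
        moreover have "\<epsilon> / R \<le> norm (f m - f n) / R" using c R by (intro divide_right_mono) auto
        ultimately have "norm (u - v) \<ge> \<epsilon> / (d + 1)" by linarith
        then have mid: "norm ((1/2) *\<^sub>R (u + v)) \<le> 1 - \<delta>" using H0 nu nv by blast
        define w where "w = (1/2) *\<^sub>R f m + (1/2) *\<^sub>R f n"
        have wK: "w \<in> K" using cv f unfolding w_def convex_def by (metis add_divide_distrib field_sum_of_halves zero_le_divide_1_iff zero_le_numeral one_add_one divide_self_if)
        have "(1/2) *\<^sub>R (u + v) = (1 / R) *\<^sub>R (x - w)"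
          by (simp add: u_def v_def w_def algebra_simps flip: scaleR_add_left)
        then have "norm (x - w) / R \<le> 1 - \<delta>" using mid R by simp
        then have "norm (x - w) \<le> R * (1 - \<delta>')" using R \<delta>' by (simp add: field_simps) (smt (verit) mult_left_mono)
        moreover have "d \<le> norm (x - w)" by (rule dle[OF wK])
        moreover have "R * (1 - \<delta>') < d"
        proof -
          have "R * (1 - \<delta>') < (d + \<delta>' * d) * (1 - \<delta>')" using N \<delta>' by (simp add: R_def)
          also have "\<dots> = d * (1 - \<delta>' * \<delta>')" by (simp add: algebra_simps)
          also have "\<dots> < d" using dpos \<delta>' by simp
          finally show ?thesis .
        qed
        ultimately show False by linarith
      qed
      then show "\<exists>M. \<forall>m\<ge>M. \<forall>n\<ge>M. norm (f m - f n) < \<epsilon>" by blast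
    qed
    then obtain l where l: "f \<longlonglongrightarrow> l" using Cauchy_convergent_iff convergent_def by blast
    have lK: "l \<in> K" using closed_sequentially[OF cl f l] .
    have "(\<lambda>n. norm (x - f n)) \<longlonglongrightarrow> norm (x - l)" using l by (intro tendsto_intros)
    then have "norm (x - l) \<le> d"
      using LIMSEQ_le[OF _ LIMSEQ_inverse_real_of_nat_add[of d]] fd by (meson less_imp_le)
    then show ?thesis using lK dle by (intro bexI[of _ l]) (auto intro: order_trans)
  qed
qed

lemma nearest_unique:
  fixes K :: "'a::real_normed_vector set"
  assumes uc: "uniformly_convex TYPE('a)" and cv: "convex K"
    and k1: "k1 \<in> K" "\<forall>k'\<in>K. norm (x - k1) \<le> norm (x - k')"
    and k2: "k2 \<in> K" "\<forall>k'\<in>K. norm (x - k2) \<le> norm (x - k')"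
  shows "k1 = k2"
proof (rule ccontr)
  assume ne: "k1 \<noteq> k2"
  define r where "r = norm (x - k1)"
  have r2: "norm (x - k2) = r" using k1 k2 unfolding r_def by (meson antisym)
  have "norm ((1/2) *\<^sub>R ((x - k1) + (x - k2))) < r"
    using uc_strict[OF uc, of "x - k1" r "x - k2"] ne r2 by (simp add: r_def)
  moreover define w where "w = (1/2) *\<^sub>R k1 + (1/2) *\<^sub>R k2"
  moreover have "w \<in> K" using cv k1 k2 unfolding w_def convex_def by (metis field_sum_of_halves zero_le_divide_1_iff zero_le_numeral)
  moreover have "(1/2) *\<^sub>R ((x - k1) + (x - k2)) = x - w"
    by (simp add: w_def algebra_simps flip: scaleR_add_left)
  ultimately show False using k1(2) r_def by force
qed

lemma blinfun_nonzero_pt: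
  fixes c :: "'a::real_normed_vector \<Rightarrow>\<^sub>L real"
  assumes "c \<noteq> 0"
  shows "\<exists>p. blinfun_apply c p = 1"
proof -
  have "\<exists>y. blinfun_apply c y \<noteq> 0"
  proof (rule ccontr)
    assume "\<not> ?thesis"
    then have "c = 0" by (intro blinfun_eqI) simp
    then show False using assms by simp
  qed
  then obtain y where y: "blinfun_apply c y \<noteq> 0" by blast
  show ?thesis by (rule exI[of _ "(1 / blinfun_apply c y) *\<^sub>R y"]) (use y in \<open>simp add: blinfun.scaleR_right\<close>)
qed

lemma norm_attain:
  fixes c :: "'a::banach \<Rightarrow>\<^sub>L real"
  assumes uc: "uniformly_convex TYPE('a)" and nc: "norm c = 1"
  shows "\<exists>x. norm x = 1 \<and> blinfun_apply c x = 1"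
proof -
  define K where "K = {y. 1 \<le> blinfun_apply c y}"
  have cl: "closed K" unfolding K_def
    by (intro closed_Collect_le continuous_on_const blinfun.continuous_on continuous_on_id)
  have cv: "convex K" unfolding K_def convex_def
  proof (clarify)
    fix x y :: 'a and u v :: real
    assume "1 \<le> blinfun_apply c x" "1 \<le> blinfun_apply c y" "0 \<le> u" "0 \<le> v" "u + v = 1"
    then have "u * 1 + v * 1 \<le> u * blinfun_apply c x + v * blinfun_apply c y"
      by (intro add_mono mult_left_mono) auto
    then show "1 \<le> blinfun_apply c (u *\<^sub>R x + v *\<^sub>R y)"
      using \<open>u + v = 1\<close> by (simp add: blinfun.add_right blinfun.scaleR_right)
  qed
  have "c \<noteq> 0" using nc by auto
  then obtain p where p: "blinfun_apply c p = 1" using blinfun_nonzero_pt by blast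
  then have ne: "K \<noteq> {}" unfolding K_def by (metis empty_iff mem_Collect_eq order_refl)
  obtain k where kK: "k \<in> K" and kmin: "\<forall>k'\<in>K. norm (0 - k) \<le> norm (0 - k')"
    using nearest_exists[OF uc cl cv ne, of 0] by blast
  have kmin': "norm k \<le> norm k'" if "k' \<in> K" for k' using kmin that by simp
  have ck: "1 \<le> blinfun_apply c k" using kK by (simp add: K_def)
  have ckle: "blinfun_apply c k \<le> norm k" using norm_blinfun[of c k] nc by simp
  have nk1: "norm k \<le> 1"
  proof (rule ccontr)
    assume "\<not> norm k \<le> 1"
    then have nk: "norm k > 1" by simp
    define w where "w = 1 / norm k"
    have w: "0 < w" "w < 1" using nk by (auto simp: w_def divide_less_eq)
    define q where "q = (1 + w) / 2"
    have q: "w < q" "q < 1" "q > 0" using w by (auto simp: q_def field_simps)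
    have "\<exists>y. blinfun_apply c y > q * norm y"
    proof (rule ccontr)
      assume "\<not> ?thesis"
      then have H: "blinfun_apply c y \<le> q * norm y" for y by (simp add: not_less)
      have "norm c \<le> q"
      proof (rule norm_blinfun_bound)
        fix y
        have "- blinfun_apply c y \<le> q * norm y" using H[of "- y"] by (simp add: blinfun.minus_right)
        then show "norm (blinfun_apply c y) \<le> q * norm y" using H[of y] by simp
      qed (use q in simp)
      then show False using nc q by simp
    qed
    then obtain y where y: "blinfun_apply c y > q * norm y" by blast
    have "q * norm y \<ge> 0" using q by simp
    then have cy: "blinfun_apply c y > 0" using y by linarith
    define y' where "y' = (1 / blinfun_apply c y) *\<^sub>R y"
    have "y' \<in> K" using cy by (simp add: K_def y'_def blinfun.scaleR_right)
    have "norm y' = norm y / blinfun_apply c y" using cy by (simp add: y'_def)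
    also have "\<dots> < 1 / q" using y cy q by (simp add: field_simps)
    also have "\<dots> < 1 / w" using q w by (intro divide_strict_left_mono) auto
    also have "\<dots> = norm k" using nk by (simp add: w_def)
    finally show False using kmin'[OF \<open>y' \<in> K\<close>] by simp
  qed
  show ?thesis using ck ckle nk1 by (intro exI[of _ k]) simp
qed

lemma dualJinv_props:
  fixes c :: "'a::banach \<Rightarrow>\<^sub>L real"
  assumes uc: "uniformly_convex TYPE('a)" and us: "uniformly_smooth TYPE('a)" and nc: "norm c = 1"
  shows "dualJ (dualJinv c) = c" "norm (dualJinv c) = 1"
    "\<And>y. dualJ y = c \<Longrightarrow> dualJinv c = y"
proof -
  obtain x where x: "norm x = 1" "blinfun_apply c x = 1" using norm_attain[OF uc nc] by blast
  have Jx: "dualJ x = c" using dualJ_iff[OF us] x nc by simp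
  have uq: "y = x" if "dualJ y = c" for y
  proof (rule ccontr)
    assume ne: "y \<noteq> x"
    have "blinfun_apply c y = (norm y)^2" "norm c = norm y" using dualJ_iff[OF us] that by auto
    then have y: "norm y = 1" "blinfun_apply c y = 1" using nc by auto
    have "norm ((1/2) *\<^sub>R (x + y)) < 1" using uc_strict[OF uc, of x 1 y] x y ne by auto
    moreover have "blinfun_apply c ((1/2) *\<^sub>R (x + y)) = 1"
      using x y by (simp add: blinfun.scaleR_right blinfun.add_right)
    moreover have "blinfun_apply c ((1/2) *\<^sub>R (x + y)) \<le> norm ((1/2) *\<^sub>R (x + y))"
      using norm_blinfun[of c "(1/2) *\<^sub>R (x + y)"] nc by simp
    ultimately show False by simp
  qed
  have ex1: "\<exists>!y. dualJ y = c" using Jx uq by blast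
  have di: "dualJinv c = x" unfolding dualJinv_def using the1_equality[OF ex1 Jx] .
  show "dualJ (dualJinv c) = c" using di Jx by simp
  show "norm (dualJinv c) = 1" using di x by simp
  show "\<And>y. dualJ y = c \<Longrightarrow> dualJinv c = y" using di uq by simp
qed

lemma not_multiple:
  fixes a b :: "'a::real_normed_vector \<Rightarrow>\<^sub>L real"
  assumes "norm a = 1" "norm b = 1" "b \<noteq> a" "b \<noteq> - a"
  shows "b \<noteq> s *\<^sub>R a"
proof
  assume h: "b = s *\<^sub>R a"
  then have "\<bar>s\<bar> = 1" using assms by simp
  then have "s = 1 \<or> s = -1" by auto
  then show False using h assms by auto
qed

lemma lin_comb_nonzero:
  fixes a b :: "'a::real_normed_vector \<Rightarrow>\<^sub>L real"
  assumes na: "norm a = 1" and nb: "norm b = 1" and ba: "b \<noteq> a" "b \<noteq> - a"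
    and l: "l \<ge> 0" and m: "m \<ge> 0" and lm: "(l, m) \<noteq> (0, 0)"
  shows "l *\<^sub>R a + m *\<^sub>R b \<noteq> 0"
proof
  assume h: "l *\<^sub>R a + m *\<^sub>R b = 0"
  show False
  proof (cases "m = 0")
    case True
    then have "l \<noteq> 0" using lm by simp
    then show False using h True na by simp
  next
    case False
    have "b = (- l / m) *\<^sub>R a"
    proof -
      have "m *\<^sub>R b = - (l *\<^sub>R a)" using h by (simp add: eq_neg_iff_add_eq_0 add.commute)
      then have "(1/m) *\<^sub>R (m *\<^sub>R b) = (1/m) *\<^sub>R (- (l *\<^sub>R a))" by simp
      then show ?thesis using False by (simp add: divide_inverse)
    qed
    then show False using not_multiple[OF na nb ba] by blast
  qed
qed

lemma arc_norm:
  fixes a b :: "'a::real_normed_vector \<Rightarrow>\<^sub>L real"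
  assumes "norm a = 1" "norm b = 1" "b \<noteq> a" "b \<noteq> - a" "c \<in> meridian_arc a b"
  shows "norm c = 1"
proof -
  obtain l m where lm: "c = (1 / norm (l *\<^sub>R a + m *\<^sub>R b)) *\<^sub>R (l *\<^sub>R a + m *\<^sub>R b)" "l \<ge> 0" "m \<ge> 0" "(l, m) \<noteq> (0, 0)"
    using assms(5) unfolding meridian_arc_def by blast
  have "l *\<^sub>R a + m *\<^sub>R b \<noteq> 0" using lin_comb_nonzero[OF assms(1-4) lm(2-4)] .
  then show ?thesis using lm(1) by simp
qed

lemma a_in_arc:
  fixes a b :: "'a::real_normed_vector \<Rightarrow>\<^sub>L real"
  assumes "norm a = 1"
  shows "a \<in> meridian_arc a b"
  unfolding meridian_arc_def using assms
  by (intro CollectI exI[of _ 1] exI[of _ 0]) simp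

lemma b_in_arc:
  fixes a b :: "'a::real_normed_vector \<Rightarrow>\<^sub>L real"
  assumes "norm b = 1"
  shows "b \<in> meridian_arc a b"
  unfolding meridian_arc_def using assms
  by (intro CollectI exI[of _ 0] exI[of _ 1]) simp

lemma wedge_char:
  fixes a b :: "'a::real_normed_vector \<Rightarrow>\<^sub>L real"
  assumes "norm a = 1" "norm b = 1"
  shows "wedge a b = {x. blinfun_apply a x \<le> 0 \<and> blinfun_apply b x \<le> 0}"
proof (intro set_eqI iffI)
  fix x assume "x \<in> wedge a b"
  then show "x \<in> {x. blinfun_apply a x \<le> 0 \<and> blinfun_apply b x \<le> 0}"
    using a_in_arc[OF assms(1), of b] b_in_arc[OF assms(2), of a] unfolding wedge_def by auto
next
  fix x assume x: "x \<in> {x. blinfun_apply a x \<le> 0 \<and> blinfun_apply b x \<le> 0}"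
  show "x \<in> wedge a b" unfolding wedge_def
  proof (clarify)
    fix c assume "c \<in> meridian_arc a b"
    then obtain l m where lm: "c = (1 / norm (l *\<^sub>R a + m *\<^sub>R b)) *\<^sub>R (l *\<^sub>R a + m *\<^sub>R b)" "l \<ge> 0" "m \<ge> 0"
      unfolding meridian_arc_def by blast
    have "l * blinfun_apply a x + m * blinfun_apply b x \<le> 0"
      using x lm by (simp add: add_nonpos_nonpos mult_nonneg_nonpos)
    then show "blinfun_apply c x \<le> 0" using lm(1)
      by (simp add: blinfun.scaleR_left blinfun.add_left divide_nonpos_nonneg)
  qed
qed

lemma ker_lemma:
  fixes a b :: "'a::real_normed_vector \<Rightarrow>\<^sub>L real"
  assumes p: "blinfun_apply a p = 1" and H: "\<And>x. blinfun_apply a x = 0 \<Longrightarrow> blinfun_apply b x = 0"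
  shows "b = blinfun_apply b p *\<^sub>R a"
proof (rule blinfun_eqI)
  fix x
  have "blinfun_apply a (x - blinfun_apply a x *\<^sub>R p) = 0"
    using p by (simp add: blinfun.diff_right blinfun.scaleR_right)
  then have "blinfun_apply b (x - blinfun_apply a x *\<^sub>R p) = 0" by (rule H)
  then show "blinfun_apply b x = blinfun_apply (blinfun_apply b p *\<^sub>R a) x"
    by (simp add: blinfun.diff_right blinfun.scaleR_right blinfun.scaleR_left)
qed

lemma dual_pt:
  fixes a b :: "'a::real_normed_vector \<Rightarrow>\<^sub>L real"
  assumes na: "norm a = 1" and nb: "norm b = 1" and ba: "b \<noteq> a" "b \<noteq> - a"
  shows "\<exists>v. blinfun_apply a v = 0 \<and> blinfun_apply b v = 1"
proof -
  have "a \<noteq> 0" using na by auto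
  then obtain p where p: "blinfun_apply a p = 1" using blinfun_nonzero_pt by blast
  have "\<exists>q. blinfun_apply a q = 0 \<and> blinfun_apply b q \<noteq> 0"
  proof (rule ccontr)
    assume "\<not> ?thesis"
    then have "b = blinfun_apply b p *\<^sub>R a" by (intro ker_lemma[OF p]) auto
    then show False using not_multiple[OF na nb ba] by blast
  qed
  then obtain q where q: "blinfun_apply a q = 0" "blinfun_apply b q \<noteq> 0" by blast
  show ?thesis using q by (intro exI[of _ "(1 / blinfun_apply b q) *\<^sub>R q"]) (simp add: blinfun.scaleR_right)
qed

lemma farkas2:
  fixes a b f :: "'a::real_normed_vector \<Rightarrow>\<^sub>L real"
  assumes na: "norm a = 1" and nb: "norm b = 1" and ba: "b \<noteq> a" "b \<noteq> - a"
    and H: "\<And>k. blinfun_apply a k \<le> 0 \<Longrightarrow> blinfun_apply b k \<le> 0 \<Longrightarrow> blinfun_apply f k \<le> 0"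
  shows "\<exists>l m. l \<ge> 0 \<and> m \<ge> 0 \<and> f = l *\<^sub>R a + m *\<^sub>R b"
proof -
  obtain v where v: "blinfun_apply a v = 0" "blinfun_apply b v = 1" using dual_pt[OF na nb ba] by blast
  have ab: "a \<noteq> b" "a \<noteq> - b" using ba by auto
  obtain u where u: "blinfun_apply b u = 0" "blinfun_apply a u = 1" using dual_pt[OF nb na ab] by blast
  have f0: "blinfun_apply f k = 0" if "blinfun_apply a k = 0" "blinfun_apply b k = 0" for k
  proof -
    have "blinfun_apply f k \<le> 0" using H that by simp
    moreover have "blinfun_apply f (- k) \<le> 0" using H[of "- k"] that by (simp add: blinfun.minus_right)
    ultimately show ?thesis by (simp add: blinfun.minus_right)
  qed
  have fu: "blinfun_apply f u \<ge> 0"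
    using H[of "- u"] u by (simp add: blinfun.minus_right)
  have fv: "blinfun_apply f v \<ge> 0"
    using H[of "- v"] v by (simp add: blinfun.minus_right)
  have "f = blinfun_apply f u *\<^sub>R a + blinfun_apply f v *\<^sub>R b"
  proof (rule blinfun_eqI)
    fix x
    define k where "k = x - blinfun_apply a x *\<^sub>R u - blinfun_apply b x *\<^sub>R v"
    have "blinfun_apply a k = 0" "blinfun_apply b k = 0" using u v
      by (simp_all add: k_def blinfun.diff_right blinfun.scaleR_right)
    then have "blinfun_apply f k = 0" by (rule f0)
    then have e: "blinfun_apply f x - blinfun_apply a x * blinfun_apply f u - blinfun_apply b x * blinfun_apply f v = 0"
      by (simp add: k_def blinfun.diff_right blinfun.scaleR_right)
    have r: "blinfun_apply (blinfun_apply f u *\<^sub>R a + blinfun_apply f v *\<^sub>R b) x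
        = blinfun_apply a x * blinfun_apply f u + blinfun_apply b x * blinfun_apply f v"
      by (simp add: blinfun.add_left blinfun.scaleR_left mult.commute)
    show "blinfun_apply f x = blinfun_apply (blinfun_apply f u *\<^sub>R a + blinfun_apply f v *\<^sub>R b) x"
      unfolding r using e by linarith
  qed
  then show ?thesis using fu fv by blast
qed

theorem mainTheorem5:
  fixes a b :: "'a::banach \<Rightarrow>\<^sub>L real"
  assumes "uniformly_convex TYPE('a)"
    and "uniformly_smooth TYPE('a)"
    and "norm a = 1" and "norm b = 1"
    and "b \<noteq> a" and "b \<noteq> - a"
  shows "polar_cone (wedge a b) = (\<Union>c \<in> meridian_arc a b. {t *\<^sub>R dualJinv c | t. t \<ge> 0})
       \<and> (\<Union>c \<in> meridian_arc a b. {t *\<^sub>R dualJinv c | t. t \<ge> 0})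
           = cone_hull_of (dualJinv ` meridian_arc a b)"
proof -
  note uc = assms(1) and us = assms(2) and na = assms(3) and nb = assms(4) and ba = assms(5,6)
  define W where "W = wedge a b"
  define U where "U = (\<Union>c \<in> meridian_arc a b. {t *\<^sub>R dualJinv c | t. t \<ge> 0})"
  have Wc: "W = {x. blinfun_apply a x \<le> 0 \<and> blinfun_apply b x \<le> 0}"
    unfolding W_def by (rule wedge_char[OF na nb])
  have clW: "closed W" unfolding Wc
    by (intro closed_Collect_conj closed_Collect_le continuous_on_const blinfun.continuous_on continuous_on_id)
  have cvW: "convex W" unfolding Wc convex_def
  proof (clarify)
    fix x y :: 'a and u v :: real
    assume h: "blinfun_apply a x \<le> 0" "blinfun_apply b x \<le> 0" "blinfun_apply a y \<le> 0" "blinfun_apply b y \<le> 0"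
      "0 \<le> u" "0 \<le> v"
    have "u * blinfun_apply a x + v * blinfun_apply a y \<le> 0"
      using h by (simp add: add_nonpos_nonpos mult_nonneg_nonpos)
    moreover have "u * blinfun_apply b x + v * blinfun_apply b y \<le> 0"
      using h by (simp add: add_nonpos_nonpos mult_nonneg_nonpos)
    ultimately show "blinfun_apply a (u *\<^sub>R x + v *\<^sub>R y) \<le> 0 \<and> blinfun_apply b (u *\<^sub>R x + v *\<^sub>R y) \<le> 0"
      by (simp add: blinfun.add_right blinfun.scaleR_right)
  qed
  have W0: "0 \<in> W" unfolding Wc by simp
  have Wcone: "t *\<^sub>R k \<in> W" if "k \<in> W" "t \<ge> 0" for k t
    using that unfolding Wc by (simp add: blinfun.scaleR_right mult_nonneg_nonpos)
  have step3: "metric_proj W x = 0 \<longleftrightarrow> (\<forall>k\<in>W. norm x \<le> norm (x - k))" for x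
  proof -
    obtain p where p: "p \<in> W" "\<forall>k'\<in>W. norm (x - p) \<le> norm (x - k')"
      using nearest_exists[OF uc clW cvW] W0 by blast
    have ex1: "\<exists>!k. k \<in> W \<and> (\<forall>k'\<in>W. norm (x - k) \<le> norm (x - k'))"
    proof (rule ex1I[of _ p])
      show "p \<in> W \<and> (\<forall>k'\<in>W. norm (x - p) \<le> norm (x - k'))" using p by simp
      fix k assume "k \<in> W \<and> (\<forall>k'\<in>W. norm (x - k) \<le> norm (x - k'))"
      then show "k = p" using nearest_unique[OF uc cvW _ _ p] by simp
    qed
    have mp: "metric_proj W x = p" unfolding metric_proj_def
      by (rule the1_equality[OF ex1]) (use p in simp)
    show ?thesis
    proof
      assume "metric_proj W x = 0"
      then show "\<forall>k\<in>W. norm x \<le> norm (x - k)" using mp p by simp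
    next
      assume h: "\<forall>k\<in>W. norm x \<le> norm (x - k)"
      have "0 = p" using nearest_unique[OF uc cvW W0 _ p] h by simp
      then show "metric_proj W x = 0" using mp by simp
    qed
  qed
  have step4: "(\<forall>k\<in>W. norm x \<le> norm (x - k)) \<longleftrightarrow> (\<forall>k\<in>W. blinfun_apply (dualJ x) k \<le> 0)" for x
  proof
    assume h: "\<forall>k\<in>W. norm x \<le> norm (x - k)"
    show "\<forall>k\<in>W. blinfun_apply (dualJ x) k \<le> 0"
    proof
      fix k assume k: "k \<in> W"
      show "blinfun_apply (dualJ x) k \<le> 0"
        by (rule dualJ_nonpos[OF us]) (use h Wcone[OF k] in auto)
    qed
  next
    assume h: "\<forall>k\<in>W. blinfun_apply (dualJ x) k \<le> 0"
    show "\<forall>k\<in>W. norm x \<le> norm (x - k)"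
    proof
      fix k assume k: "k \<in> W"
      have "(norm x)^2 = blinfun_apply (dualJ x) x" using dualJ_props[OF us, of x] by simp
      also have "\<dots> \<le> blinfun_apply (dualJ x) x - blinfun_apply (dualJ x) k" using h k by simp
      also have "\<dots> = blinfun_apply (dualJ x) (x - k)" by (simp add: blinfun.diff_right)
      also have "\<dots> \<le> norm (dualJ x) * norm (x - k)" using norm_blinfun[of "dualJ x" "x - k"] by simp
      also have "\<dots> = norm x * norm (x - k)" using dualJ_props[OF us, of x] by simp
      finally have "norm x * norm x \<le> norm x * norm (x - k)" by (simp add: power2_eq_square)
      then show "norm x \<le> norm (x - k)"
        by (cases "norm x = 0") (auto simp: mult_le_cancel_left)
    qed
  qed
  have step5: "(\<forall>k\<in>W. blinfun_apply (dualJ x) k \<le> 0) \<longleftrightarrow>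
      (\<exists>l m. l \<ge> 0 \<and> m \<ge> 0 \<and> dualJ x = l *\<^sub>R a + m *\<^sub>R b)" for x
  proof
    assume "\<forall>k\<in>W. blinfun_apply (dualJ x) k \<le> 0"
    then show "\<exists>l m. l \<ge> 0 \<and> m \<ge> 0 \<and> dualJ x = l *\<^sub>R a + m *\<^sub>R b"
      by (intro farkas2[OF na nb ba]) (auto simp: Wc)
  next
    assume "\<exists>l m. l \<ge> 0 \<and> m \<ge> 0 \<and> dualJ x = l *\<^sub>R a + m *\<^sub>R b"
    then obtain l m where lm: "l \<ge> 0" "m \<ge> 0" "dualJ x = l *\<^sub>R a + m *\<^sub>R b" by blast
    show "\<forall>k\<in>W. blinfun_apply (dualJ x) k \<le> 0"
      using lm unfolding Wc
      by (auto simp: blinfun.add_left blinfun.scaleR_left add_nonpos_nonpos mult_nonneg_nonpos)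
  qed
  have step6: "(\<exists>l m. l \<ge> 0 \<and> m \<ge> 0 \<and> dualJ x = l *\<^sub>R a + m *\<^sub>R b) \<longleftrightarrow> x \<in> U" for x
  proof
    assume "\<exists>l m. l \<ge> 0 \<and> m \<ge> 0 \<and> dualJ x = l *\<^sub>R a + m *\<^sub>R b"
    then obtain l m where lm: "l \<ge> 0" "m \<ge> 0" "dualJ x = l *\<^sub>R a + m *\<^sub>R b" by blast
    show "x \<in> U"
    proof (cases "x = 0")
      case True
      then have "x = 0 *\<^sub>R dualJinv a" by simp
      then have "x \<in> {t *\<^sub>R dualJinv a | t. t \<ge> 0}" by (intro CollectI exI[of _ 0]) simp
      then show ?thesis unfolding U_def by (rule UN_I[OF a_in_arc[OF na, of b], rotated])
    next
      case False
      define nx where "nx = norm x"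
      have nx: "nx > 0" using False by (simp add: nx_def)
      have nJ: "norm (dualJ x) = nx" using dualJ_props[OF us, of x] by (simp add: nx_def)
      have lm0: "(l, m) \<noteq> (0, 0)" using lm(3) nJ nx by auto
      define c where "c = (1 / norm (l *\<^sub>R a + m *\<^sub>R b)) *\<^sub>R (l *\<^sub>R a + m *\<^sub>R b)"
      have cA: "c \<in> meridian_arc a b" unfolding meridian_arc_def c_def
        by (intro CollectI exI[of _ l] exI[of _ m]) (use lm lm0 in simp)
      have c_eq: "c = (1 / nx) *\<^sub>R dualJ x" unfolding c_def using lm(3) nJ by simp
      have "dualJ ((1 / nx) *\<^sub>R x) = c" using dualJ_scale[OF us, of "1 / nx" x] nx c_eq by simp
      then have "dualJinv c = (1 / nx) *\<^sub>R x"
        using dualJinv_props(3)[OF uc us arc_norm[OF na nb ba cA]] by blast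
      then have "x = nx *\<^sub>R dualJinv c" using nx by simp
      then have "x \<in> {t *\<^sub>R dualJinv c | t. t \<ge> 0}" using nx by (intro CollectI exI[of _ nx]) simp
      then show ?thesis unfolding U_def by (rule UN_I[OF cA, rotated])
    qed
  next
    assume "x \<in> U"
    then obtain c where cA: "c \<in> meridian_arc a b" and "x \<in> {t *\<^sub>R dualJinv c | t. t \<ge> 0}"
      unfolding U_def by (rule UN_E)
    then obtain t where t: "t \<ge> 0" and x: "x = t *\<^sub>R dualJinv c" by auto
    obtain l m where lm: "c = (1 / norm (l *\<^sub>R a + m *\<^sub>R b)) *\<^sub>R (l *\<^sub>R a + m *\<^sub>R b)" "l \<ge> 0" "m \<ge> 0"
      using cA unfolding meridian_arc_def by auto
    define N where "N = norm (l *\<^sub>R a + m *\<^sub>R b)"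
    have "dualJ x = t *\<^sub>R c"
      using x dualJ_scale[OF us t] dualJinv_props(1)[OF uc us arc_norm[OF na nb ba cA]] by simp
    also have "\<dots> = (t / N * l) *\<^sub>R a + (t / N * m) *\<^sub>R b"
      unfolding lm(1) N_def[symmetric] by (simp add: scaleR_add_right)
    finally have "dualJ x = (t / N * l) *\<^sub>R a + (t / N * m) *\<^sub>R b" .
    moreover have "t / N * l \<ge> 0" "t / N * m \<ge> 0" using t lm by (simp_all add: N_def)
    ultimately show "\<exists>l m. l \<ge> 0 \<and> m \<ge> 0 \<and> dualJ x = l *\<^sub>R a + m *\<^sub>R b" by blast
  qed
  have first: "polar_cone W = U"
  proof (rule set_eqI)
    fix x
    have "x \<in> polar_cone W \<longleftrightarrow> metric_proj W x = 0" by (simp add: polar_cone_def)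
    also have "\<dots> \<longleftrightarrow> x \<in> U" using step3[of x] step4[of x] step5[of x] step6[of x] by simp
    finally show "x \<in> polar_cone W \<longleftrightarrow> x \<in> U" .
  qed
  have second: "U = cone_hull_of (dualJinv ` meridian_arc a b)"
    unfolding U_def cone_hull_of_def by auto
  show ?thesis using first second unfolding W_def U_def by simp
qed

end
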